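(* Let $X,Y$ be maximal consistent sets (relative to the axiom system of $\mathbb{PCL}$) and $A,B,C$ formulas. If $A\le_X B$, $B\le_X C$, $X^A\subseteq Y$ and $C\in Y$, then $X^B\subseteq Y$.
   Context: Formulas $\mathcal{L}::=p\mid\bot\mid A\wedge B\mid A\lor B\mid A\to B\mid A>B$. The axiom system of $\mathbb{PCL}$: classical propositional logic, rules (RCEA) from $A\leftrightarrow B$ infer $(A>C)\leftrightarrow(B>C)$, (RCK) from $A\to B$ infer $(C>A)\to(C>B)$, axioms (ID) $A>A$, (R-And) $(A>B)\wedge(A>C)\to(A>(B\wedge C))$, (CM) $(A>B)\wedge(A>C)\to((A\wedge B)>C)$, (OR) $(A>C)\wedge(B>C)\to((A\lor B)>C)$. For a maximal consistent set $X$: $X^B=\{D\mid B>D\in X\}$ and $A\le_X B$ iff $(A\lor B)>A\in X$. *)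

theory Defs
  imports Main
begin

datatype 'p fm =
    Atom 'p
  | Bot
  | Conj "'p fm" "'p fm"
  | Disj "'p fm" "'p fm"
  | Imp "'p fm" "'p fm"
  | Cond "'p fm" "'p fm"

definition Neg :: "'p fm \<Rightarrow> 'p fm" where "Neg A = Imp A Bot"
definition Iff :: "'p fm \<Rightarrow> 'p fm \<Rightarrow> 'p fm" where
  "Iff A B = Conj (Imp A B) (Imp B A)"

(* classical truth evaluation: conditionals A > B are treated as propositional atoms *)
fun peval :: "('p fm \<Rightarrow> bool) \<Rightarrow> 'p fm \<Rightarrow> bool" where
  "peval v (Atom p) = v (Atom p)"
| "peval v Bot = False"
| "peval v (Conj A B) = (peval v A \<and> peval v B)"
| "peval v (Disj A B) = (peval v A \<or> peval v B)"
| "peval v (Imp A B) = (peval v A \<longrightarrow> peval v B)"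
| "peval v (Cond A B) = v (Cond A B)"

definition tautology :: "'p fm \<Rightarrow> bool" where
  "tautology A \<longleftrightarrow> (\<forall>v. peval v A)"

inductive PCL :: "'p fm \<Rightarrow> bool" where
  Taut: "tautology A \<Longrightarrow> PCL A"
| MP: "PCL (Imp A B) \<Longrightarrow> PCL A \<Longrightarrow> PCL B"
| RCEA: "PCL (Iff A B) \<Longrightarrow> PCL (Iff (Cond A C) (Cond B C))"
| RCK: "PCL (Imp A B) \<Longrightarrow> PCL (Imp (Cond C A) (Cond C B))"
| ID: "PCL (Cond A A)"
| RAnd: "PCL (Imp (Conj (Cond A B) (Cond A C)) (Cond A (Conj B C)))"
| CM: "PCL (Imp (Conj (Cond A B) (Cond A C)) (Cond (Conj A B) C))"
| OR: "PCL (Imp (Conj (Cond A C) (Cond B C)) (Cond (Disj A B) C))"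

definition derives :: "'p fm set \<Rightarrow> 'p fm \<Rightarrow> bool" where
  "derives \<Gamma> A \<longleftrightarrow> (\<exists>xs. set xs \<subseteq> \<Gamma> \<and> PCL (foldr Imp xs A))"

definition consistent :: "'p fm set \<Rightarrow> bool" where
  "consistent \<Gamma> \<longleftrightarrow> \<not> derives \<Gamma> Bot"

definition maximal_consistent :: "'p fm set \<Rightarrow> bool" where
  "maximal_consistent X \<longleftrightarrow> consistent X \<and> (\<forall>A. A \<notin> X \<longrightarrow> \<not> consistent (insert A X))"

definition cond_set :: "'p fm set \<Rightarrow> 'p fm \<Rightarrow> 'p fm set" where
  "cond_set X B = {D. Cond B D \<in> X}"

definition pref_le :: "'p fm set \<Rightarrow> 'p fm \<Rightarrow> 'p fm \<Rightarrow> bool" where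
  "pref_le X A B \<longleftrightarrow> Cond (Disj A B) A \<in> X"

end

theory Submission
  imports Defs
begin

lemma peval_foldr: "peval v (foldr Imp xs C) = ((\<forall>x\<in>set xs. peval v x) \<longrightarrow> peval v C)"
  by (induction xs) auto

lemma taut_mp: "tautology (Imp A B) \<Longrightarrow> PCL A \<Longrightarrow> PCL B"
  using PCL.MP PCL.Taut by blast

lemma derives_mp:
  assumes "derives G (Imp A B)" "derives G A" shows "derives G B"
proof -
  obtain xs where xs: "set xs \<subseteq> G" "PCL (foldr Imp xs (Imp A B))" using assms(1) derives_def by blast
  obtain ys where ys: "set ys \<subseteq> G" "PCL (foldr Imp ys A)" using assms(2) derives_def by blast
  have t: "tautology (Imp (foldr Imp xs (Imp A B)) (Imp (foldr Imp ys A) (foldr Imp (xs@ys) B)))"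
    unfolding tautology_def by (auto simp: peval_foldr)
  have "PCL (foldr Imp (xs@ys) B)" using PCL.MP[OF PCL.MP[OF PCL.Taut[OF t] xs(2)] ys(2)] .
  then show ?thesis unfolding derives_def using xs ys by (intro exI[of _ "xs@ys"]) auto
qed

lemma derives_mem: "A \<in> G \<Longrightarrow> derives G A"
  unfolding derives_def
  by (intro exI[of _ "[A]"]) (auto intro!: PCL.Taut simp: tautology_def)

lemma derives_thm: "PCL A \<Longrightarrow> derives G A"
  unfolding derives_def by (intro exI[of _ "[]"]) auto

lemma derives_ded:
  assumes "derives (insert A G) B" shows "derives G (Imp A B)"
proof -
  obtain xs where xs: "set xs \<subseteq> insert A G" "PCL (foldr Imp xs B)" using assms derives_def by blast
  let ?ys = "filter (\<lambda>x. x \<noteq> A) xs"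
  have t: "tautology (Imp (foldr Imp xs B) (foldr Imp ?ys (Imp A B)))"
    unfolding tautology_def by (auto simp: peval_foldr)
  have "PCL (foldr Imp ?ys (Imp A B))" using PCL.MP[OF PCL.Taut[OF t] xs(2)] .
  then show ?thesis unfolding derives_def using xs by (intro exI[of _ ?ys]) auto
qed

lemma mc_closed:
  assumes "maximal_consistent X" "derives X A" shows "A \<in> X"
proof (rule ccontr)
  assume "A \<notin> X"
  then have "derives (insert A X) Bot" using assms(1) unfolding maximal_consistent_def consistent_def by blast
  then have "derives X (Imp A Bot)" by (rule derives_ded)
  then have "derives X Bot" using derives_mp assms(2) by blast
  then show False using assms(1) unfolding maximal_consistent_def consistent_def by blast
qed

lemma mc_mp: "maximal_consistent X \<Longrightarrow> Imp A B \<in> X \<Longrightarrow> A \<in> X \<Longrightarrow> B \<in> X"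
  by (meson derives_mem derives_mp mc_closed)

lemma mc_thm: "maximal_consistent X \<Longrightarrow> PCL A \<Longrightarrow> A \<in> X"
  by (simp add: derives_thm mc_closed)

lemma mc_taut2:
  assumes "maximal_consistent X" "tautology (Imp P (Imp Q R))" "P \<in> X" "Q \<in> X"
  shows "R \<in> X"
  using assms by (meson PCL.Taut mc_mp mc_thm)

lemma mc_conj: "maximal_consistent X \<Longrightarrow> P \<in> X \<Longrightarrow> Q \<in> X \<Longrightarrow> Conj P Q \<in> X"
  by (rule mc_taut2[of X P Q]) (simp_all add: tautology_def)

lemma mc_RCEA:
  assumes X: "maximal_consistent X" and t: "tautology (Iff A B)" and c: "Cond A C \<in> X"
  shows "Cond B C \<in> X"
proof -
  have "PCL (Iff (Cond A C) (Cond B C))" by (rule PCL.RCEA[OF PCL.Taut[OF t]])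
  then have "Iff (Cond A C) (Cond B C) \<in> X" using X mc_thm by blast
  moreover have "tautology (Imp (Iff (Cond A C) (Cond B C)) (Imp (Cond A C) (Cond B C)))"
    by (simp add: tautology_def Iff_def)
  ultimately show ?thesis using mc_taut2[OF X] c by blast
qed

lemma mc_RW:
  assumes X: "maximal_consistent X" and t: "tautology (Imp B C)" and c: "Cond A B \<in> X"
  shows "Cond A C \<in> X"
  using mc_mp[OF X mc_thm[OF X PCL.RCK[OF PCL.Taut[OF t]]] c] .

lemma mc_ID: "maximal_consistent X \<Longrightarrow> Cond A A \<in> X"
  using PCL.ID mc_thm by blast

lemma mc_RAnd: "maximal_consistent X \<Longrightarrow> Cond A B \<in> X \<Longrightarrow> Cond A C \<in> X \<Longrightarrow> Cond A (Conj B C) \<in> X"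
  by (meson PCL.RAnd mc_conj mc_mp mc_thm)

lemma mc_CM: "maximal_consistent X \<Longrightarrow> Cond A B \<in> X \<Longrightarrow> Cond A C \<in> X \<Longrightarrow> Cond (Conj A B) C \<in> X"
  by (meson PCL.CM mc_conj mc_mp mc_thm)

lemma mc_OR: "maximal_consistent X \<Longrightarrow> Cond A C \<in> X \<Longrightarrow> Cond B C \<in> X \<Longrightarrow> Cond (Disj A B) C \<in> X"
  by (meson PCL.OR mc_conj mc_mp mc_thm)

lemma mc_L:
  assumes X: "maximal_consistent X" and c: "Cond P Q \<in> X"
  shows "Cond (Disj P R) (Imp P Q) \<in> X"
proof -
  have 1: "Cond P (Imp P Q) \<in> X" by (rule mc_RW[OF X _ c]) (auto simp: tautology_def)
  have 2: "Cond (Conj R (Neg P)) (Imp P Q) \<in> X"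
    by (rule mc_RW[OF X _ mc_ID[OF X]]) (auto simp: tautology_def Neg_def)
  have "Cond (Disj P (Conj R (Neg P))) (Imp P Q) \<in> X" by (rule mc_OR[OF X 1 2])
  then show ?thesis by (rule mc_RCEA[OF X, rotated]) (auto simp: tautology_def Neg_def Iff_def)
qed

lemma mc_Cut:
  assumes X: "maximal_consistent X" and c1: "Cond P Q \<in> X" and c2: "Cond (Conj P Q) R \<in> X"
  shows "Cond P R \<in> X"
proof -
  have "Cond (Disj (Conj P Q) P) (Imp (Conj P Q) R) \<in> X" by (rule mc_L[OF X c2])
  then have a: "Cond P (Imp (Conj P Q) R) \<in> X"
    by (rule mc_RCEA[OF X, rotated]) (auto simp: tautology_def Iff_def)
  have "Cond P (Conj P (Conj Q (Imp (Conj P Q) R))) \<in> X"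
    by (intro mc_RAnd[OF X] mc_ID[OF X] c1 a)
  then show ?thesis by (rule mc_RW[OF X, rotated]) (auto simp: tautology_def)
qed

theorem mainTheorem6:
  fixes X Y :: "'p fm set" and A B C :: "'p fm"
  assumes "maximal_consistent X" and "maximal_consistent Y"
    and "pref_le X A B" and "pref_le X B C"
    and "cond_set X A \<subseteq> Y" and "C \<in> Y"
  shows "cond_set X B \<subseteq> Y"
proof
  fix D assume "D \<in> cond_set X B"
  then have h3: "Cond B D \<in> X" by (simp add: cond_set_def)
  note X = assms(1)
  have h1: "Cond (Disj A B) A \<in> X" using assms(3) by (simp add: pref_le_def)
  have h2: "Cond (Disj B C) B \<in> X" using assms(4) by (simp add: pref_le_def)
  define E where "E = Disj (Disj A B) (Disj B C)"
  have s1a: "Cond (Disj B C) (Disj A B) \<in> X" by (rule mc_RW[OF X _ h2]) (auto simp: tautology_def)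
  have s1: "Cond E (Disj A B) \<in> X" unfolding E_def by (rule mc_OR[OF X mc_ID[OF X] s1a])
  have s2a: "Cond (Conj E (Disj A B)) A \<in> X"
    by (rule mc_RCEA[OF X _ h1]) (auto simp: tautology_def Iff_def E_def)
  have EA: "Cond E A \<in> X" by (rule mc_Cut[OF X s1 s2a])
  have s3: "Cond (Disj (Disj B C) A) (Imp (Disj B C) B) \<in> X" by (rule mc_L[OF X h2])
  have s3': "Cond E (Imp (Disj B C) B) \<in> X"
    by (rule mc_RCEA[OF X _ s3]) (auto simp: tautology_def Iff_def E_def)
  have s4: "Cond (Disj B E) (Imp B D) \<in> X" by (rule mc_L[OF X h3])
  have s4': "Cond E (Imp B D) \<in> X"
    by (rule mc_RCEA[OF X _ s4]) (auto simp: tautology_def Iff_def E_def)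
  have s5: "Cond E (Imp C D) \<in> X"
    by (rule mc_RW[OF X _ mc_RAnd[OF X s3' s4']]) (auto simp: tautology_def)
  have s6: "Cond (Conj E A) (Imp C D) \<in> X" by (rule mc_CM[OF X EA s5])
  have "Cond A (Imp C D) \<in> X"
    by (rule mc_RCEA[OF X _ s6]) (auto simp: tautology_def Iff_def E_def)
  then have "Imp C D \<in> Y" using assms(5) by (auto simp: cond_set_def)
  then show "D \<in> Y" using mc_mp[OF assms(2)] assms(6) by blast
qed

end
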